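(* Let $p\in(0,1)$ be fixed. Then with high probability $$ \mathrm{sat}\left(G\left(n,p\right),C_4\right)\geqslant\frac{3}{2} n(1+o(1)). $$
   Context: $G(n,p)$ is the binomial random graph on vertex set $[n]$ in which each pair of vertices is adjacent independently with probability $p$. A property holds with high probability if its probability tends to $1$ as $n\to\infty$; $o(1)$ denotes a function of $n$ tending to $0$. $C_4$ is the cycle on $4$ vertices. For graphs $F,G$, a spanning subgraph $H\subseteq G$ is $F$-saturated in $G$ if $H$ contains no copy of $F$ but adding to $H$ any edge of $G$ not in $H$ creates a copy of $F$; $\mathrm{sat}(G,F)$ is the minimum number of edges of an $F$-saturated graph in $G$. *)

theory Defs
  imports "HOL-Probability.Probability"
begin

text \<open>Graphs on vertex set [n] (represented as {0..<n}) are sets of edges,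
each edge being a 2-element subset of the vertex set.\<close>

definition all_pairs :: "nat \<Rightarrow> nat set set" where
  "all_pairs n = {e. e \<subseteq> {..<n} \<and> card e = 2}"

definition Gnp :: "nat \<Rightarrow> real \<Rightarrow> nat set set pmf" where
  "Gnp n p = map_pmf (\<lambda>f. {e \<in> all_pairs n. f e})
              (Pi_pmf (all_pairs n) False (\<lambda>_. bernoulli_pmf p))"

definition has_C4 :: "nat set set \<Rightarrow> bool" where
  "has_C4 H \<longleftrightarrow> (\<exists>a b c d. distinct [a, b, c, d] \<and>
      {a, b} \<in> H \<and> {b, c} \<in> H \<and> {c, d} \<in> H \<and> {d, a} \<in> H)"

definition C4_saturated_in :: "nat set set \<Rightarrow> nat set set \<Rightarrow> bool" where
  "C4_saturated_in G H \<longleftrightarrow> H \<subseteq> G \<and> \<not> has_C4 H \<and>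
      (\<forall>e \<in> G - H. has_C4 (insert e H))"

definition sat_C4 :: "nat set set \<Rightarrow> nat" where
  "sat_C4 G = Min (card ` {H. C4_saturated_in G H})"

end

theory Submission
  imports Defs "HOL-Real_Asymp.Real_Asymp"
begin


definition nb :: "nat set set \<Rightarrow> nat \<Rightarrow> nat set" where
  "nb H v = {u. {v,u} \<in> H}"

definition indep :: "nat set set \<Rightarrow> nat set \<Rightarrow> bool" where
  "indep G S \<longleftrightarrow> (\<forall>a\<in>S. \<forall>b\<in>S. a \<noteq> b \<longrightarrow> {a,b} \<notin> G)"

lemma dsym: "{x,y} = {y,x}" by (simp add: insert_commute)

lemma c4_aux:
  assumes "{a,b} = {v,w}" "{b,c} \<in> H" "{c,d} \<in> H" "{d,a} \<in> H" "distinct [a,b,c,d]"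
  shows "\<exists>x y. {v,x} \<in> H \<and> {x,y} \<in> H \<and> {y,w} \<in> H \<and> distinct [v,x,y,w]"
proof (cases "a = v")
  case True
  hence "b = w" using assms(1,5) by (auto simp: doubleton_eq_iff)
  hence "{v,d} \<in> H \<and> {d,c} \<in> H \<and> {c,w} \<in> H \<and> distinct [v,d,c,w]"
    using assms True by (auto simp: dsym[of v d] dsym[of d c] dsym[of c w])
  thus ?thesis by blast
next
  case False
  hence "a = w" "b = v" using assms(1) by (auto simp: doubleton_eq_iff)
  hence "{v,c} \<in> H \<and> {c,d} \<in> H \<and> {d,w} \<in> H \<and> distinct [v,c,d,w]"
    using assms by auto
  thus ?thesis by blast
qed

lemma ins_other: "X \<in> insert E H \<Longrightarrow> E = {a,b} \<Longrightarrow> y \<in> X \<Longrightarrow> y \<noteq> a \<Longrightarrow> y \<noteq> b \<Longrightarrow> X \<in> H"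
  by auto

lemma sat_path:
  assumes sat: "C4_saturated_in G H" and e: "{v,w} \<in> G" "{v,w} \<notin> H"
  shows "\<exists>a b. {v,a} \<in> H \<and> {a,b} \<in> H \<and> {b,w} \<in> H \<and> distinct [v,a,b,w]"
proof -
  have nC: "\<not> has_C4 H" and C: "has_C4 (insert {v,w} H)" using sat e unfolding C4_saturated_in_def by auto
  from C obtain a b c d where abcd: "distinct [a,b,c,d]" "{a,b} \<in> insert {v,w} H" "{b,c} \<in> insert {v,w} H"
    "{c,d} \<in> insert {v,w} H" "{d,a} \<in> insert {v,w} H"
  proof -
    from C obtain a b c d where "distinct [a,b,c,d] \<and> {a,b} \<in> insert {v,w} H \<and> {b,c} \<in> insert {v,w} H
    \<and> {c,d} \<in> insert {v,w} H \<and> {d,a} \<in> insert {v,w} H" unfolding has_C4_def by iprover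
    thus ?thesis using that by iprover
  qed
  have H4: False if "{a,b} \<in> H" "{b,c} \<in> H" "{c,d} \<in> H" "{d,a} \<in> H"
  proof -
    have "has_C4 H" unfolding has_C4_def
      by (rule exI[of _ a], rule exI[of _ b], rule exI[of _ c], rule exI[of _ d]) (simp only: that abcd(1) simp_thms)
    thus False using nC by simp
  qed
  have ne: "\<And>x y z t. x \<notin> {z,t} \<Longrightarrow> {x,y} \<noteq> {z,t}" "\<And>x y z t. y \<notin> {z,t} \<Longrightarrow> {x,y} \<noteq> {z,t}" by auto
  have d1: "distinct [b,c,d,a]" "distinct [c,d,a,b]" "distinct [d,a,b,c]" using abcd(1) by auto
  have D: "a \<noteq> b" "a \<noteq> c" "a \<noteq> d" "b \<noteq> c" "b \<noteq> d" "c \<noteq> d" using abcd(1) by auto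
  have ins: "\<And>x. x \<in> insert {v,w} H \<Longrightarrow> x = {v,w} \<or> x \<in> H" by simp
  consider "{a,b} = {v,w}" | "{b,c} = {v,w}" | "{c,d} = {v,w}" | "{d,a} = {v,w}"
    using H4 ins[OF abcd(2)] ins[OF abcd(3)] ins[OF abcd(4)] ins[OF abcd(5)] by argo
  then show ?thesis
  proof cases
    case 1
    have "{b,c} \<in> H" "{c,d} \<in> H" "{d,a} \<in> H"
      using ins_other[OF abcd(3) 1[symmetric], of c] ins_other[OF abcd(4) 1[symmetric], of c]
        ins_other[OF abcd(5) 1[symmetric], of d] D by auto
    then show ?thesis using c4_aux[OF 1 _ _ _ abcd(1)] by blast
  next
    case 2
    have "{c,d} \<in> H" "{d,a} \<in> H" "{a,b} \<in> H"
      using ins_other[OF abcd(4) 2[symmetric], of d] ins_other[OF abcd(5) 2[symmetric], of d]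
        ins_other[OF abcd(2) 2[symmetric], of a] D by auto
    then show ?thesis using c4_aux[OF 2 _ _ _ d1(1)] by blast
  next
    case 3
    have "{d,a} \<in> H" "{a,b} \<in> H" "{b,c} \<in> H"
      using ins_other[OF abcd(5) 3[symmetric], of a] ins_other[OF abcd(2) 3[symmetric], of a]
        ins_other[OF abcd(3) 3[symmetric], of b] D by auto
    then show ?thesis using c4_aux[OF 3 _ _ _ d1(2)] by blast
  next
    case 4
    have "{a,b} \<in> H" "{b,c} \<in> H" "{c,d} \<in> H"
      using ins_other[OF abcd(2) 4[symmetric], of b] ins_other[OF abcd(3) 4[symmetric], of b]
        ins_other[OF abcd(4) 4[symmetric], of c] D by auto
    then show ?thesis using c4_aux[OF 4 _ _ _ d1(3)] by blast
  qed
qed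

lemma greedy_indep:
  fixes R :: "'a \<Rightarrow> 'a \<Rightarrow> bool"
  assumes "finite M" and "\<And>v. v \<in> M \<Longrightarrow> card {w\<in>M. R v w} \<le> d"
    and "\<And>v w. R v w \<Longrightarrow> R w v"
  shows "\<exists>I\<subseteq>M. (\<forall>v\<in>I. \<forall>w\<in>I. v \<noteq> w \<longrightarrow> \<not> R v w) \<and> card M \<le> (d+1) * card I"
  using assms
proof (induction M rule: finite_psubset_induct)
  case (psubset M)
  show ?case
  proof (cases "M = {}")
    case True then show ?thesis by auto
  next
    case False
    then obtain v where v: "v \<in> M" by auto
    define M' where "M' = M - insert v {w\<in>M. R v w}"
    have sub: "M' \<subset> M" using v M'_def by auto
    have bnd: "\<And>u. u \<in> M' \<Longrightarrow> card {w\<in>M'. R u w} \<le> d"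
    proof -
      fix u assume "u \<in> M'"
      hence "card {w\<in>M'. R u w} \<le> card {w\<in>M. R u w}"
        by (intro card_mono) (auto simp: M'_def psubset.hyps)
      thus "card {w\<in>M'. R u w} \<le> d" using psubset.prems(1) \<open>u \<in> M'\<close> M'_def by fastforce
    qed
    obtain I where I: "I \<subseteq> M'" "\<forall>x\<in>I. \<forall>y\<in>I. x \<noteq> y \<longrightarrow> \<not> R x y" "card M' \<le> (d+1) * card I"
      using psubset.IH[OF sub bnd psubset.prems(2)] by metis
    have vI: "v \<notin> I" using I(1) M'_def by auto
    have fI: "finite I" using I(1) psubset.hyps finite_subset M'_def by blast
    have "\<forall>x\<in>insert v I. \<forall>y\<in>insert v I. x \<noteq> y \<longrightarrow> \<not> R x y"
      using I(1,2) M'_def psubset.prems(2) by blast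
    moreover have "card M \<le> (d+1) * card (insert v I)"
    proof -
      have "M \<subseteq> M' \<union> insert v {w\<in>M. R v w}" using M'_def by auto
      hence "card M \<le> card M' + card (insert v {w\<in>M. R v w})"
      proof -
        have "card M \<le> card (M' \<union> insert v {w\<in>M. R v w})"
          by (rule card_mono) (use \<open>M \<subseteq> _\<close> psubset.hyps M'_def in auto)
        also have "\<dots> \<le> card M' + card (insert v {w\<in>M. R v w})" by (rule card_Un_le)
        finally show ?thesis .
      qed
      moreover have "card (insert v {w\<in>M. R v w}) \<le> card {w\<in>M. R v w} + 1"
        using card_insert_le_m1 by (simp add: card_insert_if psubset.hyps)
      moreover have "card {w\<in>M. R v w} \<le> d" using psubset.prems(1)[OF v] .
      moreover have "card (insert v I) = card I + 1" using fI vI by simp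
      ultimately show ?thesis using I(3) by (simp add: algebra_simps)
    qed
    moreover have "insert v I \<subseteq> M" using I(1) v M'_def by auto
    ultimately show ?thesis by blast
  qed
qed



lemma nb_sub: assumes "H \<subseteq> all_pairs n" shows "nb H v \<subseteq> {..<n}"
proof
  fix u assume "u \<in> nb H v"
  hence "{v,u} \<in> all_pairs n" using assms unfolding nb_def by auto
  thus "u \<in> {..<n}" unfolding all_pairs_def by auto
qed

lemma nb_fin: assumes "H \<subseteq> all_pairs n" shows "finite (nb H v)"
  using nb_sub[OF assms] finite_subset by blast

lemma nb_sym: "u \<in> nb H v \<longleftrightarrow> v \<in> nb H u"
  unfolding nb_def by (simp add: insert_commute)

lemma nb_irr: assumes "H \<subseteq> all_pairs n" shows "v \<notin> nb H v"
proof
  assume "v \<in> nb H v"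
  hence "{v} \<in> all_pairs n" using assms unfolding nb_def by auto
  thus False unfolding all_pairs_def by auto
qed

lemma nb_in: assumes "H \<subseteq> all_pairs n" "u \<in> nb H v" shows "v \<in> {..<n}"
  using nb_sub[OF assms(1), of u] assms(2) nb_sym by blast

lemma handshake:
  assumes "H \<subseteq> all_pairs n"
  shows "(\<Sum>v\<in>{..<n}. card (nb H v)) \<le> 2 * card H"
proof -
  have finH: "finite H"
  proof (rule finite_subset[OF assms])
    show "finite (all_pairs n)" unfolding all_pairs_def
      by (rule finite_subset[of _ "Pow {..<n}"]) auto
  qed
  have "(\<Sum>v\<in>{..<n}. card (nb H v)) = card (SIGMA v:{..<n}. nb H v)"
    using nb_fin[OF assms] by simp
  also have "\<dots> \<le> card (H \<times> (UNIV :: bool set))"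
  proof (rule card_inj_on_le[where f = "\<lambda>(v,u). ({v,u}, v < u)"])
    show "inj_on (\<lambda>(v,u). ({v,u}, v < u)) (SIGMA v:{..<n}. nb H v)"
    proof (rule inj_onI, clarsimp)
      fix v u v' u' assume h: "u \<in> nb H v" "u' \<in> nb H v'" "{v,u} = {v',u'}" "(v < u) = (v' < u')"
      have "v \<noteq> u" "v' \<noteq> u'" using h(1,2) nb_irr[OF assms] by auto
      thus "v = v' \<and> u = u'" using h(3,4) by (auto simp: doubleton_eq_iff)
    qed
    show "(\<lambda>(v,u). ({v,u}, v < u)) ` (SIGMA v:{..<n}. nb H v) \<subseteq> H \<times> UNIV"
      unfolding nb_def by auto
    show "finite (H \<times> (UNIV :: bool set))" using finH by simp
  qed
  also have "\<dots> = 2 * card H" by (simp add: card_cartesian_product)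
  finally show ?thesis .
qed



lemma indep_small:
  assumes noind: "\<forall>S\<subseteq>{..<n}. card S = K \<longrightarrow> \<not> indep G S"
    and S: "S \<subseteq> {..<n}" "indep G S"
  shows "card S < K"
proof (rule ccontr)
  assume "\<not> card S < K"
  then obtain T where T: "T \<subseteq> S" "card T = K" by (meson not_less obtain_subset_with_card_n)
  have "indep G T" using S(2) T(1) unfolding indep_def by blast
  thus False using noind T S(1) by blast
qed

lemma pendant_indep:
  assumes sat: "C4_saturated_in G H"
  shows "indep G {v\<in>V. nb H v = {x}}"
  unfolding indep_def
proof (intro ballI impI)
  fix v w assume v: "v \<in> {v\<in>V. nb H v = {x}}" and w: "w \<in> {v\<in>V. nb H v = {x}}" and vw: "v \<noteq> w"
  show "{v,w} \<notin> G"
  proof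
    assume e: "{v,w} \<in> G"
    show False
    proof (cases "{v,w} \<in> H")
      case True
      hence "w \<in> nb H v" "v \<in> nb H w" unfolding nb_def by (auto simp: insert_commute)
      thus False using v w vw by auto
    next
      case False
      from sat_path[OF sat e False] obtain a b where ab: "{v,a} \<in> H" "{a,b} \<in> H" "{b,w} \<in> H"
        "distinct [v,a,b,w]" by blast
      have "a \<in> nb H v" "b \<in> nb H w" using ab unfolding nb_def by (auto simp: insert_commute)
      thus False using v w ab(4) by auto
    qed
  qed
qed

lemma M_deg:
  fixes D :: nat
  assumes sat: "C4_saturated_in G H" and Hn: "H \<subseteq> all_pairs n"
    and Mdeg2: "\<And>v. v \<in> M \<Longrightarrow> card (nb H v) \<le> 2"
    and Mnb: "\<And>v u. v \<in> M \<Longrightarrow> u \<in> nb H v \<Longrightarrow> card (nb H u) < D"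
    and vM: "v \<in> M"
  shows "card {w\<in>M. {v,w} \<in> G \<and> v \<noteq> w} \<le> 2 * D^2 + 2"
proof -
  have nbf: "finite (nb H u)" for u using nb_fin[OF Hn] .
  define U where "U = (\<Union>a\<in>nb H v. \<Union>b\<in>{b\<in>nb H a. card (nb H b) < D}. nb H b)"
  have sub: "{w\<in>M. {v,w} \<in> G \<and> v \<noteq> w} \<subseteq> nb H v \<union> U"
  proof
    fix w assume w: "w \<in> {w\<in>M. {v,w} \<in> G \<and> v \<noteq> w}"
    hence e: "{v,w} \<in> G" by auto
    show "w \<in> nb H v \<union> U"
    proof (cases "{v,w} \<in> H")
      case True thus ?thesis unfolding nb_def by auto
    next
      case False
      from sat_path[OF sat e False] obtain a b where ab: "{v,a} \<in> H" "{a,b} \<in> H" "{b,w} \<in> H"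
        by blast
      have nbs: "a \<in> nb H v" "b \<in> nb H a" "w \<in> nb H b" "b \<in> nb H w" using ab unfolding nb_def
        by (auto simp: insert_commute)
      have "card (nb H b) < D" using Mnb[of w b] w nbs(4) by auto
      thus ?thesis using nbs unfolding U_def by blast
    qed
  qed
  have dv: "card (nb H v) \<le> 2" using Mdeg2[OF vM] .
  have inner: "card (\<Union>b\<in>{b\<in>nb H a. card (nb H b) < D}. nb H b) \<le> D * D" if a: "a \<in> nb H v" for a
  proof -
    have "card (\<Union>b\<in>{b\<in>nb H a. card (nb H b) < D}. nb H b) \<le> (\<Sum>b\<in>{b\<in>nb H a. card (nb H b) < D}. card (nb H b))"
      by (rule card_UN_le) (use nbf in auto)
    also have "\<dots> \<le> (\<Sum>b\<in>{b\<in>nb H a. card (nb H b) < D}. D)"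
      by (rule sum_mono) auto
    also have "\<dots> = card {b\<in>nb H a. card (nb H b) < D} * D" by simp
    also have "card {b\<in>nb H a. card (nb H b) < D} \<le> D"
    proof -
      have "card {b\<in>nb H a. card (nb H b) < D} \<le> card (nb H a)" by (rule card_mono[OF nbf]) auto
      also have "\<dots> < D" using Mnb[OF vM a] .
      finally show ?thesis by simp
    qed
    finally show ?thesis by simp
  qed
  have "card U \<le> (\<Sum>a\<in>nb H v. card (\<Union>b\<in>{b\<in>nb H a. card (nb H b) < D}. nb H b))"
    unfolding U_def by (rule card_UN_le[OF nbf])
  also have "\<dots> \<le> (\<Sum>a\<in>nb H v. D * D)" by (rule sum_mono) (rule inner)
  also have "\<dots> = card (nb H v) * (D * D)" by simp
  also have "\<dots> \<le> 2 * (D * D)" using dv by simp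
  finally have cU: "card U \<le> 2 * D^2" by (simp add: power2_eq_square)
  have finU: "finite U" unfolding U_def using nbf by auto
  have "card {w\<in>M. {v,w} \<in> G \<and> v \<noteq> w} \<le> card (nb H v \<union> U)"
    by (rule card_mono[OF _ sub]) (use finU nbf in auto)
  also have "\<dots> \<le> card (nb H v) + card U" by (rule card_Un_le)
  finally show ?thesis using dv cU by simp
qed

lemma M_bound:
  fixes D K :: nat
  assumes sat: "C4_saturated_in G H" and Hn: "H \<subseteq> all_pairs n"
    and finM: "finite M" and MV: "M \<subseteq> {..<n}"
    and indepK: "\<And>S. S \<subseteq> {..<n} \<Longrightarrow> indep G S \<Longrightarrow> card S < K"
    and Mdeg2: "\<And>v. v \<in> M \<Longrightarrow> card (nb H v) \<le> 2"
    and Mnb: "\<And>v u. v \<in> M \<Longrightarrow> u \<in> nb H v \<Longrightarrow> card (nb H u) < D"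
  shows "card M \<le> (2 * D^2 + 3) * K"
proof -
  define R where "R v w = ({v,w} \<in> G \<and> v \<noteq> w)" for v w
  have Rs: "R v w \<Longrightarrow> R w v" for v w unfolding R_def by (auto simp: insert_commute)
  have degM: "card {w\<in>M. R v w} \<le> 2 * D^2 + 2" if vM: "v \<in> M" for v
    unfolding R_def by (rule M_deg[OF sat Hn Mdeg2 Mnb vM])
  have ex: "\<exists>I\<subseteq>M. (\<forall>v\<in>I. \<forall>w\<in>I. v \<noteq> w \<longrightarrow> \<not> R v w) \<and> card M \<le> (2 * D^2 + 2 + 1) * card I"
    by (rule greedy_indep[where M=M and R=R and d="2*D^2+2", OF finM]) (use degM Rs in auto)
  then obtain I where I: "I \<subseteq> M" "\<forall>v\<in>I. \<forall>w\<in>I. v \<noteq> w \<longrightarrow> \<not> R v w"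
      "card M \<le> (2 * D^2 + 2 + 1) * card I" by auto
  have "indep G I" using I(2) unfolding indep_def R_def by auto
  moreover have "I \<subseteq> {..<n}" using I(1) MV by auto
  ultimately have "card I < K" using indepK by simp
  have "card M \<le> (2 * D^2 + 3) * card I" using I(3) by (simp add: algebra_simps)
  also have "\<dots> \<le> (2 * D^2 + 3) * K" using \<open>card I < K\<close> by simp
  finally show ?thesis .
qed

lemma main_comb:
  fixes n K D :: nat
  assumes G: "G \<subseteq> all_pairs n" and sat: "C4_saturated_in G H" and D3: "3 \<le> D"
   and noind: "\<forall>S\<subseteq>{..<n}. card S = K \<longrightarrow> \<not> indep G S"
  shows "3 * real n \<le> 2 * real (card H) + (3 + real K) * (2 * real (card H) / real D)
            + 3 * real K * (2 * real D ^ 2 + 3)"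
proof -
  have HG: "H \<subseteq> G" using sat unfolding C4_saturated_in_def by auto
  have Hn: "H \<subseteq> all_pairs n" using HG G by auto
  define V where "V = {..<n}"
  define deg where "deg v = card (nb H v)" for v
  define B where "B = {v\<in>V. D \<le> deg v}"
  define L where "L = {v\<in>V. deg v \<le> 2}"
  define M where "M = {v\<in>L. \<forall>u\<in>nb H v. deg u < D}"
  define P where "P = {v\<in>L-M. deg v \<le> 1}"
  have finV: "finite V" unfolding V_def by simp
  have nbV: "nb H v \<subseteq> V" for v using nb_sub[OF Hn] V_def by auto
  have nbf: "finite (nb H v)" for v using nb_fin[OF Hn] .
  have BV: "B \<subseteq> V" unfolding B_def by auto
  have LV: "L \<subseteq> V" unfolding L_def by auto
  have MsubL: "M \<subseteq> L" unfolding M_def by auto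
  have PL: "P \<subseteq> L - M" unfolding P_def by auto
  have BL: "B \<inter> L = {}" using D3 unfolding B_def L_def by auto
  have finB: "finite B" and finL: "finite L" and finM: "finite M" and finP: "finite P"
    using finite_subset[OF BV finV] finite_subset[OF LV finV] finite_subset[OF MsubL] finite_subset[OF PL]
    by auto
  have indepK: "card S < K" if "S \<subseteq> V" "indep G S" for S
    using indep_small[OF noind] that V_def by auto
  have hs: "(\<Sum>v\<in>V. deg v) \<le> 2 * card H" using handshake[OF Hn] unfolding V_def deg_def .
  have LMB: "\<exists>x. x \<in> nb H v \<and> x \<in> B" if "v \<in> L - M" for v
  proof -
    from that obtain x where x: "x \<in> nb H v" "\<not> deg x < D" unfolding M_def by auto
    thus ?thesis using nbV[of v] unfolding B_def by (intro exI[of _ x]) auto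
  qed
  have a: "card (L - M) \<le> (\<Sum>x\<in>B. deg x)"
  proof -
    define f where "f v = ((SOME x. x \<in> nb H v \<and> x \<in> B), v)" for v
    have "card (L - M) \<le> card (SIGMA x:B. nb H x)"
    proof (rule card_inj_on_le[where f = f])
      show "inj_on f (L - M)" unfolding f_def by (rule inj_onI) auto
      show "f ` (L - M) \<subseteq> (SIGMA x:B. nb H x)"
      proof
        fix y assume "y \<in> f ` (L - M)"
        then obtain v where v: "v \<in> L - M" "y = f v" by auto
        have "(SOME x. x \<in> nb H v \<and> x \<in> B) \<in> nb H v \<and> (SOME x. x \<in> nb H v \<and> x \<in> B) \<in> B"
          using someI_ex[OF LMB[OF v(1)]] .
        thus "y \<in> (SIGMA x:B. nb H x)" using v(2) nb_sym unfolding f_def by auto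
      qed
      show "finite (SIGMA x:B. nb H x)" using finB nbf by auto
    qed
    also have "\<dots> = (\<Sum>x\<in>B. deg x)" using finB nbf unfolding deg_def by simp
    finally show ?thesis .
  qed
  have b: "3 * card (V - B) \<le> (\<Sum>v\<in>V-B. deg v) + 3 * card M + card (L - M) + card P"
  proof -
    have pv: "3 \<le> deg v + 3 * of_bool (v \<in> M) + of_bool (v \<in> L - M) + of_bool (v \<in> P)"
      if "v \<in> V - B" for v
    proof (cases "v \<in> L")
      case False thus ?thesis using that unfolding L_def by auto
    next
      case True
      show ?thesis
      proof (cases "v \<in> M")
        case True thus ?thesis by simp
      next
        case False
        with \<open>v \<in> L\<close> have vLM: "v \<in> L - M" by auto
        then obtain x where "x \<in> nb H v" using LMB by blast
        hence "deg v \<ge> 1" unfolding deg_def using nbf card_0_eq by (metis empty_iff less_one not_less)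
        thus ?thesis using vLM unfolding P_def by auto
      qed
    qed
    have "(\<Sum>v\<in>V-B. 3) \<le> (\<Sum>v\<in>V-B. deg v + 3 * of_bool (v \<in> M) + of_bool (v \<in> L - M) + of_bool (v \<in> P))"
      by (rule sum_mono) (rule pv)
    also have "\<dots> = (\<Sum>v\<in>V-B. deg v) + 3 * (\<Sum>v\<in>V-B. of_bool (v \<in> M)) + (\<Sum>v\<in>V-B. of_bool (v \<in> L - M))
        + (\<Sum>v\<in>V-B. of_bool (v \<in> P))"
      by (simp add: sum.distrib sum_distrib_left)
    also have "(\<Sum>v\<in>V-B. of_bool (v \<in> M)) = card M"
    proof -
      have "(V - B) \<inter> {v. v \<in> M} = M" using MsubL LV BL by auto
      thus ?thesis using finV by simp
    qed
    also have "(\<Sum>v\<in>V-B. of_bool (v \<in> L - M)) = card (L - M)"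
    proof -
      have "(V - B) \<inter> {v. v \<in> L - M} = L - M" using LV BL by auto
      thus ?thesis using finV by simp
    qed
    also have "(\<Sum>v\<in>V-B. of_bool (v \<in> P)) = card P"
    proof -
      have "(V - B) \<inter> {v. v \<in> P} = P" using PL LV BL by auto
      thus ?thesis using finV by simp
    qed
    finally show ?thesis by simp
  qed
  have split: "(\<Sum>v\<in>V. deg v) = (\<Sum>v\<in>V-B. deg v) + (\<Sum>v\<in>B. deg v)"
    using sum.subset_diff[OF BV finV] by simp
  have cardV: "card V = card (V - B) + card B" using card_Diff_subset[OF finB BV] card_mono[OF finV BV] finV
    by (simp add: V_def)
  have step1: "3 * n \<le> 2 * card H + 3 * card B + 3 * card M + card P"
  proof -
    have "3 * n = 3 * card (V - B) + 3 * card B" using cardV V_def by simp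
    thus ?thesis using a b split hs by linarith
  qed
  have c: "D * card B \<le> 2 * card H"
  proof -
    have "card B * D \<le> (\<Sum>x\<in>B. deg x)" using sum_bounded_below[of B D deg] B_def by auto
    also have "\<dots> \<le> (\<Sum>v\<in>V. deg v)" using split by simp
    finally show ?thesis using hs by (simp add: mult.commute)
  qed
  have d: "card P \<le> K * card B"
  proof -
    have "P \<subseteq> (\<Union>x\<in>B. {v\<in>V. nb H v = {x}})"
    proof
      fix v assume v: "v \<in> P"
      then obtain x where x: "x \<in> nb H v" "x \<in> B" using LMB PL by blast
      have "deg v \<le> 1" using v unfolding P_def by auto
      hence "\<forall>a\<in>nb H v. \<forall>b\<in>nb H v. a = b" unfolding deg_def using card_le_Suc0_iff_eq[OF nbf] by simp
      hence "nb H v = {x}" using x(1) by blast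
      thus "v \<in> (\<Union>x\<in>B. {v\<in>V. nb H v = {x}})" using x v PL LV by auto
    qed
    hence "card P \<le> card (\<Union>x\<in>B. {v\<in>V. nb H v = {x}})"
      by (rule card_mono[rotated]) (use finB finV in auto)
    also have "\<dots> \<le> (\<Sum>x\<in>B. card {v\<in>V. nb H v = {x}})" by (rule card_UN_le[OF finB])
    also have "\<dots> \<le> (\<Sum>x\<in>B. K)"
    proof (rule sum_mono)
      fix x assume "x \<in> B"
      have "indep G {v\<in>V. nb H v = {x}}" by (rule pendant_indep[OF sat])
      thus "card {v\<in>V. nb H v = {x}} \<le> K" using indepK[of "{v\<in>V. nb H v = {x}}"] by auto
    qed
    also have "\<dots> = K * card B" by simp
    finally show ?thesis .
  qed
  have e: "card M \<le> (2 * D^2 + 3) * K"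
  proof (rule M_bound[OF sat Hn finM])
    show "M \<subseteq> {..<n}" using MsubL LV V_def by auto
    show "\<And>S. S \<subseteq> {..<n} \<Longrightarrow> indep G S \<Longrightarrow> card S < K" using indepK V_def by auto
    show "\<And>v. v \<in> M \<Longrightarrow> card (nb H v) \<le> 2" using MsubL unfolding L_def deg_def by auto
    show "\<And>v u. v \<in> M \<Longrightarrow> u \<in> nb H v \<Longrightarrow> card (nb H u) < D" unfolding M_def deg_def by auto
  qed
  have r1: "3 * real n \<le> 2 * real (card H) + 3 * real (card B) + 3 * real (card M) + real (card P)"
    using step1 by linarith
  have "real (D * card B) \<le> real (2 * card H)" using c by (simp only: of_nat_le_iff)
  hence "real D * real (card B) \<le> 2 * real (card H)" by simp
  hence r2: "real (card B) \<le> 2 * real (card H) / real D"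
    using D3 by (simp add: pos_le_divide_eq mult.commute)
  have "real (card P) \<le> real (K * card B)" using d by (simp only: of_nat_le_iff)
  hence r3: "real (card P) \<le> real K * real (card B)" by simp
  have "real (card M) \<le> real ((2 * D^2 + 3) * K)" using e by (simp only: of_nat_le_iff)
  hence r4: "real (card M) \<le> (2 * real D ^ 2 + 3) * real K" by simp
  have "3 * real (card B) + real (card P) \<le> (3 + real K) * real (card B)" using r3 by (simp add: algebra_simps)
  also have "\<dots> \<le> (3 + real K) * (2 * real (card H) / real D)" using r2 by (intro mult_left_mono) auto
  finally show ?thesis using r1 r4 by (simp add: algebra_simps)
qed



lemma finite_all_pairs: "finite (all_pairs n)"
  unfolding all_pairs_def by (rule finite_subset[of _ "Pow {..<n}"]) auto

lemma not_has_C4_empty: "\<not> has_C4 {}" unfolding has_C4_def by simp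

lemma sat_exists:
  assumes "finite G" shows "\<exists>H. C4_saturated_in G H"
proof -
  define F where "F = {H. H \<subseteq> G \<and> \<not> has_C4 H}"
  have "F \<subseteq> Pow G" unfolding F_def by auto
  hence finF: "finite F" using assms finite_subset by blast
  have "{} \<in> F" unfolding F_def using not_has_C4_empty by auto
  hence neF: "card ` F \<noteq> {}" by auto
  define m where "m = Max (card ` F)"
  have "m \<in> card ` F" unfolding m_def using finF neF by (intro Max_in) auto
  then obtain H where H: "H \<in> F" "card H = m" by auto
  have mx: "card H' \<le> m" if "H' \<in> F" for H' unfolding m_def using finF that by (intro Max_ge) auto
  have HG: "H \<subseteq> G" and nH: "\<not> has_C4 H" using H(1) unfolding F_def by auto
  have finH: "finite H" using HG assms finite_subset by blast
  have "has_C4 (insert e H)" if e: "e \<in> G - H" for e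
  proof (rule ccontr)
    assume "\<not> has_C4 (insert e H)"
    hence "insert e H \<in> F" using e HG unfolding F_def by auto
    hence "card (insert e H) \<le> m" by (rule mx)
    moreover have "card (insert e H) = card H + 1" using finH e by simp
    ultimately show False using H(2) by simp
  qed
  thus ?thesis using HG nH unfolding C4_saturated_in_def by blast
qed

lemma sat_C4_attained:
  assumes "finite G" shows "\<exists>H. C4_saturated_in G H \<and> sat_C4 G = card H"
proof -
  define S where "S = {H. C4_saturated_in G H}"
  have "S \<subseteq> Pow G" unfolding S_def C4_saturated_in_def by auto
  hence finS: "finite S" using assms finite_subset by blast
  have "S \<noteq> {}" using sat_exists[OF assms] unfolding S_def by auto
  hence "Min (card ` S) \<in> card ` S" using finS by (intro Min_in) auto
  then obtain H where "H \<in> S" "Min (card ` S) = card H" by auto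
  thus ?thesis unfolding sat_C4_def S_def[symmetric] unfolding S_def by auto
qed

lemma set_Gnp: "G \<in> set_pmf (Gnp n p) \<Longrightarrow> G \<subseteq> all_pairs n"
  unfolding Gnp_def by auto

lemma bad_prob:
  assumes p: "0 \<le> p" "p \<le> 1"
  shows "measure_pmf.prob (Gnp n p) {G. \<exists>S\<subseteq>{..<n}. card S = K \<and> indep G S}
         \<le> real (n choose K) * (1 - p) ^ (K choose 2)"
proof -
  define X where "X = Pi_pmf (all_pairs n) False (\<lambda>_. bernoulli_pmf p)"
  define g where "g f = {e \<in> all_pairs n. f e}" for f :: "nat set \<Rightarrow> bool"
  define SS where "SS = {S. S \<subseteq> {..<n} \<and> card S = K}"
  define E where "E S = {e. e \<subseteq> S \<and> card e = 2}" for S :: "nat set"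
  define Q where "Q S = {f. indep (g f) S}" for S
  have finSS: "finite SS" unfolding SS_def by (rule finite_subset[of _ "Pow {..<n}"]) auto
  have "measure_pmf.prob (Gnp n p) {G. \<exists>S\<subseteq>{..<n}. card S = K \<and> indep G S}
      = measure_pmf.prob X (g -` {G. \<exists>S\<subseteq>{..<n}. card S = K \<and> indep G S})"
    unfolding Gnp_def X_def g_def by simp
  also have "g -` {G. \<exists>S\<subseteq>{..<n}. card S = K \<and> indep G S} = (\<Union>S\<in>SS. Q S)"
    unfolding SS_def Q_def by auto
  also have "measure_pmf.prob X (\<Union>S\<in>SS. Q S) \<le> (\<Sum>S\<in>SS. measure_pmf.prob X (Q S))"
    by (rule measure_pmf.finite_measure_subadditive_finite[OF finSS]) auto
  also have "\<dots> \<le> (\<Sum>S\<in>SS. (1 - p) ^ (K choose 2))"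
  proof (rule sum_mono)
    fix S assume S: "S \<in> SS"
    define B where "B e = (if e \<in> E S then {False} else UNIV)" for e
    have ES: "E S \<subseteq> all_pairs n" using S unfolding E_def SS_def all_pairs_def by auto
    have "Q S \<subseteq> Pi (all_pairs n) B"
    proof
      fix f assume "f \<in> Q S"
      hence ind: "indep (g f) S" unfolding Q_def by simp
      show "f \<in> Pi (all_pairs n) B"
      proof (rule Pi_I)
        fix e assume e: "e \<in> all_pairs n"
        show "f e \<in> B e"
        proof (cases "e \<in> E S")
          case True
          then obtain a b where ab: "e = {a,b}" "a \<noteq> b" unfolding E_def by (auto simp: card_2_iff)
          have "a \<in> S" "b \<in> S" using True ab unfolding E_def by auto
          hence "e \<notin> g f" using ind ab unfolding indep_def by auto
          hence "\<not> f e" using e unfolding g_def by auto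
          thus ?thesis using True unfolding B_def by auto
        next
          case False thus ?thesis unfolding B_def by auto
        qed
      qed
    qed
    hence "measure_pmf.prob X (Q S) \<le> measure_pmf.prob X (Pi (all_pairs n) B)"
      by (rule measure_pmf.finite_measure_mono) auto
    also have "\<dots> = (\<Prod>e\<in>all_pairs n. measure_pmf.prob (bernoulli_pmf p) (B e))"
      unfolding X_def by (rule measure_Pi_pmf_Pi[OF finite_all_pairs])
    also have "\<dots> = (\<Prod>e\<in>all_pairs n. if e \<in> E S then 1 - p else 1)"
      by (rule prod.cong) (auto simp: B_def measure_pmf_single p)
    also have "\<dots> = (1 - p) ^ card (E S)"
    proof -
      have "(\<Prod>e\<in>all_pairs n. if e \<in> E S then 1 - p else 1) = (\<Prod>e\<in>all_pairs n \<inter> E S. 1 - p)"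
        using prod.If_cases[OF finite_all_pairs, of "\<lambda>e. e \<in> E S" "\<lambda>_. 1 - p" "\<lambda>_. 1"] by simp
      also have "all_pairs n \<inter> E S = E S" using ES by auto
      finally show ?thesis by simp
    qed
    also have "card (E S) = K choose 2"
      using S unfolding E_def SS_def by (subst n_subsets) (auto intro: finite_subset)
    finally show "measure_pmf.prob X (Q S) \<le> (1 - p) ^ (K choose 2)" .
  qed
  also have "\<dots> = real (n choose K) * (1 - p) ^ (K choose 2)"
    unfolding SS_def by (simp add: n_subsets)
  finally show ?thesis .
qed



definition sK :: "nat \<Rightarrow> nat" where "sK n = nat \<lfloor>real n powr (1/8)\<rfloor>"

definition gg :: "nat \<Rightarrow> real" where
  "gg n = 4 * (3 + real (sK n)) / (3 * (real (sK n) ^ 3 + 3))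
          + real (sK n) * (2 * (real (sK n) ^ 3 + 3)^2 + 3) / real n"

lemma sK_bounds: "real (sK n) \<le> real n powr (1/8)" "real n powr (1/8) - 1 \<le> real (sK n)"
proof -
  have "real (sK n) = real_of_int \<lfloor>real n powr (1/8)\<rfloor>" unfolding sK_def by simp
  moreover have "real_of_int \<lfloor>real n powr (1/8)\<rfloor> \<le> real n powr (1/8)" by simp
  moreover have "real n powr (1/8) < real_of_int \<lfloor>real n powr (1/8)\<rfloor> + 1" by simp
  ultimately show "real (sK n) \<le> real n powr (1/8)" "real n powr (1/8) - 1 \<le> real (sK n)" by linarith+
qed

lemma sK_top: "filterlim (\<lambda>n. real (sK n)) at_top sequentially"
proof (rule filterlim_at_top_mono)
  show "filterlim (\<lambda>n::nat. real n powr (1/8) - 1) at_top sequentially" by real_asymp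
  show "\<forall>\<^sub>F n in sequentially. real n powr (1/8) - 1 \<le> real (sK n)" using sK_bounds by simp
qed

lemma gg_lim: "gg \<longlonglongrightarrow> 0"
proof -
  have h1: "((\<lambda>x::real. 4 * (3 + x) / (3 * (x ^ 3 + 3))) \<longlongrightarrow> 0) at_top" by real_asymp
  have t1: "(\<lambda>n. 4 * (3 + real (sK n)) / (3 * (real (sK n) ^ 3 + 3))) \<longlonglongrightarrow> 0"
    using filterlim_compose[OF h1 sK_top] by (simp add: o_def)
  define u where "u n = real n powr (1/8) * (2 * ((real n powr (1/8))^3 + 3)^2 + 3) / real n" for n :: nat
  have ul: "u \<longlonglongrightarrow> 0" unfolding u_def by real_asymp
  have t2: "(\<lambda>n. real (sK n) * (2 * (real (sK n) ^ 3 + 3)^2 + 3) / real n) \<longlonglongrightarrow> 0"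
  proof (rule tendsto_sandwich[OF _ _ tendsto_const ul])
    show "\<forall>\<^sub>F n in sequentially. 0 \<le> real (sK n) * (2 * (real (sK n) ^ 3 + 3)^2 + 3) / real n"
      by simp
    show "\<forall>\<^sub>F n in sequentially. real (sK n) * (2 * (real (sK n) ^ 3 + 3)^2 + 3) / real n \<le> u n"
    proof (rule always_eventually, rule allI)
      fix n
      define s where "s = real (sK n)"
      define t where "t = real n powr (1/8)"
      have st: "0 \<le> s" "s \<le> t" using sK_bounds[of n] unfolding s_def t_def by auto
      have "s ^ 3 + 3 \<le> t ^ 3 + 3" using st by (simp add: power_mono)
      hence "(s ^ 3 + 3)^2 \<le> (t ^ 3 + 3)^2" using st by (intro power_mono) auto
      hence "2 * (s ^ 3 + 3)^2 + 3 \<le> 2 * (t ^ 3 + 3)^2 + 3" by simp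
      hence "s * (2 * (s ^ 3 + 3)^2 + 3) \<le> t * (2 * (t ^ 3 + 3)^2 + 3)"
        using st by (intro mult_mono) auto
      hence "s * (2 * (s ^ 3 + 3)^2 + 3) / real n \<le> t * (2 * (t ^ 3 + 3)^2 + 3) / real n"
        by (intro divide_right_mono) auto
      thus "real (sK n) * (2 * (real (sK n) ^ 3 + 3)^2 + 3) / real n \<le> u n"
        unfolding u_def s_def t_def .
    qed
  qed
  show ?thesis unfolding gg_def using tendsto_add[OF t1 t2] by simp
qed

lemma gg_nonneg: "0 \<le> gg n" unfolding gg_def by simp

lemma good_bound:
  assumes n: "n \<ge> 1" and G: "G \<subseteq> all_pairs n"
    and noind: "\<not> (\<exists>S\<subseteq>{..<n}. card S = sK n \<and> indep G S)"
  shows "3 / 2 * real n * (1 + - gg n) \<le> real (sat_C4 G)"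
proof -
  have finG: "finite G" using G finite_all_pairs finite_subset by blast
  obtain H where H: "C4_saturated_in G H" "sat_C4 G = card H" using sat_C4_attained[OF finG] by blast
  define K where "K = sK n"
  define D where "D = sK n ^ 3 + 3"
  have D3: "3 \<le> D" unfolding D_def by simp
  have noind': "\<forall>S\<subseteq>{..<n}. card S = K \<longrightarrow> \<not> indep G S" using noind unfolding K_def by blast
  have mc: "3 * real n \<le> 2 * real (card H) + (3 + real K) * (2 * real (card H) / real D)
            + 3 * real K * (2 * real D ^ 2 + 3)"
    by (rule main_comb[OF G H(1) D3 noind'])
  have Dr: "real D = real K ^ 3 + 3" unfolding D_def K_def by simp
  have gK: "gg n = 4 * (3 + real K) / (3 * real D) + real K * (2 * real D ^ 2 + 3) / real n"
    unfolding gg_def Dr K_def by simp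
  have Dpos: "real D > 0" using D3 by simp
  have npos: "real n > 0" using n by simp
  show ?thesis
  proof (cases "real (card H) \<ge> 2 * real n")
    case True
    have "3 / 2 * real n * (1 + - gg n) \<le> 3 / 2 * real n" using gg_nonneg[of n] npos
      by (simp add: mult_le_cancel_left1)
    also have "\<dots> \<le> real (card H)" using True npos by simp
    finally show ?thesis using H(2) by simp
  next
    case False
    have "(3 + real K) * (2 * real (card H) / real D) \<le> (3 + real K) * (4 * real n / real D)"
      using False Dpos by (intro mult_left_mono divide_right_mono) auto
    hence A: "3 * real n \<le> 2 * real (card H) + (3 + real K) * (4 * real n / real D)
            + 3 * real K * (2 * real D ^ 2 + 3)" using mc by linarith
    have "3 / 2 * real n * (1 + - gg n) = 3/2 * real n - 2 * real n * (3 + real K) / real D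
           - 3/2 * (real K * (2 * real D ^ 2 + 3))"
      unfolding gK using npos Dpos by (simp add: field_simps)
    also have "\<dots> \<le> real (card H)"
    proof -
      have "(3 + real K) * (4 * real n / real D) = 2 * (2 * real n * (3 + real K) / real D)"
        by (simp add: field_simps)
      thus ?thesis using A by linarith
    qed
    finally show ?thesis using H(2) by simp
  qed
qed



lemma choose_le_pow: "n choose K \<le> n ^ K"
  by (cases "K \<le> n") (auto simp: binomial_le_pow binomial_eq_0)

lemma bad_lim:
  fixes p :: real
  assumes p: "0 < p" "p < 1"
  shows "(\<lambda>n. real (n choose sK n) * (1 - p) ^ (sK n choose 2)) \<longlonglongrightarrow> 0"
proof -
  define c where "c = - ln (1 - p)"
  have c: "c > 0" unfolding c_def using p by simp
  have qc: "1 - p = exp (- c)" unfolding c_def using p by simp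
  define y where "y n = real n * exp (- c * (real n powr (1/8) - 2) / 2)" for n :: nat
  have yl: "y \<longlonglongrightarrow> 0" unfolding y_def using c by real_asymp
  have ev1: "\<forall>\<^sub>F n in sequentially. y n < 1" using order_tendstoD(2)[OF yl] by simp
  have ev2: "\<forall>\<^sub>F n in sequentially. n \<ge> 1" by (rule eventually_ge_at_top)
  show ?thesis
  proof (rule tendsto_sandwich[OF _ _ tendsto_const yl])
    show "\<forall>\<^sub>F n in sequentially. 0 \<le> real (n choose sK n) * (1 - p) ^ (sK n choose 2)"
      using p by simp
    show "\<forall>\<^sub>F n in sequentially. real (n choose sK n) * (1 - p) ^ (sK n choose 2) \<le> y n"
      using ev1 ev2
    proof eventually_elim
      case (elim n)
      define K where "K = sK n"
      have "1 \<le> real n powr (1/8)" using elim(2) by (intro ge_one_powr_ge_zero) auto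
      hence "1 \<le> \<lfloor>real n powr (1/8)\<rfloor>" by simp
      hence K1: "K \<ge> 1" unfolding K_def sK_def by (metis nat_mono nat_one_as_int)
      have Klow: "real n powr (1/8) - 2 \<le> real K - 1" using sK_bounds(2)[of n] unfolding K_def by simp
      define z where "z = real n * exp (- c * (real K - 1) / 2)"
      have z0: "0 \<le> z" unfolding z_def by simp
      have zy: "z \<le> y n" unfolding z_def y_def using Klow c
        by (intro mult_left_mono) (auto simp: mult_le_cancel_left_pos)
      have ch: "real (K choose 2) = real (K - 1) * real K / 2"
        by (auto simp add: choose_two field_char_0_class.of_nat_div mod_eq_0_iff_dvd)
      have "real (n choose K) * (1 - p) ^ (K choose 2) \<le> real n ^ K * (1 - p) ^ (K choose 2)"
        using p by (intro mult_right_mono) (auto simp flip: of_nat_power intro: choose_le_pow)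
      also have "real n ^ K * (1 - p) ^ (K choose 2) = real n ^ K * exp (real (K choose 2) * (- c))"
        unfolding qc exp_of_nat_mult[symmetric] ..
      also have "real n ^ K * exp (real (K choose 2) * (- c)) = z ^ K"
      proof -
        have "z ^ K = real n ^ K * exp (- c * (real K - 1) / 2) ^ K" unfolding z_def by (simp add: power_mult_distrib)
        also have "exp (- c * (real K - 1) / 2) ^ K = exp (real K * (- c * (real K - 1) / 2))"
          by (rule exp_of_nat_mult[symmetric])
        also have "real K * (- c * (real K - 1) / 2) = real (K choose 2) * (- c)"
          unfolding ch using K1 by (simp add: of_nat_diff field_simps)
        finally show ?thesis by simp
      qed
      also have "z ^ K \<le> z ^ 1" using z0 zy elim(1) K1 by (intro power_decreasing) auto
      also have "\<dots> \<le> y n" using zy by simp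
      finally show ?case unfolding K_def .
    qed
  qed
qed

theorem theorem3:
  fixes p :: real
  assumes "0 < p" and "p < 1"
  shows "\<exists>f :: nat \<Rightarrow> real. f \<longlonglongrightarrow> 0 \<and>
    (\<lambda>n. measure_pmf.prob (Gnp n p)
        {G. real (sat_C4 G) \<ge> 3 / 2 * real n * (1 + f n)}) \<longlonglongrightarrow> 1"
proof (intro exI conjI)
  show "(\<lambda>n. - gg n) \<longlonglongrightarrow> 0" using tendsto_minus[OF gg_lim] by simp
  define bb where "bb n = real (n choose sK n) * (1 - p) ^ (sK n choose 2)" for n
  have bbl: "(\<lambda>n. 1 - bb n) \<longlonglongrightarrow> 1"
    using tendsto_diff[OF tendsto_const bad_lim[OF assms]] unfolding bb_def by simp
  show "(\<lambda>n. measure_pmf.prob (Gnp n p) {G. real (sat_C4 G) \<ge> 3 / 2 * real n * (1 + - gg n)}) \<longlonglongrightarrow> 1"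
  proof (rule tendsto_sandwich[OF _ _ bbl tendsto_const])
    show "\<forall>\<^sub>F n in sequentially. measure_pmf.prob (Gnp n p) {G. real (sat_C4 G) \<ge> 3 / 2 * real n * (1 + - gg n)} \<le> 1"
      by simp
    show "\<forall>\<^sub>F n in sequentially. 1 - bb n \<le> measure_pmf.prob (Gnp n p) {G. real (sat_C4 G) \<ge> 3 / 2 * real n * (1 + - gg n)}"
      using eventually_ge_at_top[of 1]
    proof eventually_elim
      case (elim n)
      define Bad where "Bad = {G. \<exists>S\<subseteq>{..<n}. card S = sK n \<and> indep G S}"
      define Good where "Good = {G. real (sat_C4 G) \<ge> 3 / 2 * real n * (1 + - gg n)}"
      have sub: "(UNIV - Bad) \<inter> set_pmf (Gnp n p) \<subseteq> Good"
      proof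
        fix G assume "G \<in> (UNIV - Bad) \<inter> set_pmf (Gnp n p)"
        hence "\<not> (\<exists>S\<subseteq>{..<n}. card S = sK n \<and> indep G S)" "G \<subseteq> all_pairs n"
          using set_Gnp unfolding Bad_def by auto
        thus "G \<in> Good" using good_bound[OF elim] unfolding Good_def by auto
      qed
      have "1 - bb n \<le> 1 - measure_pmf.prob (Gnp n p) Bad"
        using bad_prob[of p n "sK n"] assms unfolding bb_def Bad_def by simp
      also have "\<dots> = measure_pmf.prob (Gnp n p) (UNIV - Bad)"
        using measure_pmf.prob_compl[of Bad "Gnp n p"] by simp
      also have "\<dots> = measure_pmf.prob (Gnp n p) ((UNIV - Bad) \<inter> set_pmf (Gnp n p))"
        by (rule measure_Int_set_pmf[symmetric])
      also have "\<dots> \<le> measure_pmf.prob (Gnp n p) Good"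
        using sub by (intro measure_pmf.finite_measure_mono) auto
      finally show ?case unfolding Good_def .
    qed
  qed
qed

end
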